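(* Let $\Xi,\Gamma,\Upsilon,\delta_s>0$, $L\ge1$, $\beta>1$, and $c_1,c_2>0$. Suppose $\delta_s\le2\Gamma\Xi^2$, set $\delta_h=c_1\delta_s$ and $\Delta_h=c_2\delta_s$, and define $$\lambda_W(\xi_s)=e^{\delta_s}\Upsilon L\Xi^3,\quad \lambda_X(\xi_s)=e^{\delta_s}\Upsilon(2\Gamma\Xi^2+1),$$ $$\lambda_W(\xi_h)=2e^{\delta_h}\Upsilon L\Xi^3\big(1+\tfrac1{\Delta_h}\big),\quad \lambda_X(\xi_h)=e^{\delta_h}\Upsilon\big(\beta+2\Gamma\Xi^2(\beta+1)(1+\tfrac1{\Delta_h})\big).$$ Then $\lambda_W(\xi_h)<\lambda_W(\xi_s)$ when $$c_1+\frac1{\delta_s}\log\Big(2\Big(1+\frac1{c_2\delta_s}\Big)\Big)<1,$$ and $\lambda_X(\xi_h)<\lambda_X(\xi_s)$ when $$c_1+\frac1{\delta_s}\log\Big(2\Gamma\Xi^2(1+\beta)\Big(1+\frac1{c_2\delta_s}\Big)+\beta\Big)-\frac1{\delta_s}\log(2\Gamma\Xi^2+1)<1.$$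
   Context: These quantities are the attention stability constants for full softmax attention (semantic dispersion $\delta_s$, i.e. the largest gap between query–key dot products of any query, token norms $\le\Xi$, $\|{\mathbf W}\|\le\Gamma$, $\|{\mathbf V}\|\le\Upsilon$, sequence length $L$) and for $k$-heavy-hitter sparse attention (semantic dispersion $\delta_h$ among unmasked keys, minimum gap $\Delta_h$ between unmasked and masked dot products, at most $\beta k$ queries per key). *)

theory Defs
  imports Complex_Main
begin

text \<open>Stability constants for full softmax attention (xi_s) and heavy-hitter
sparse attention (xi_h). Parameters: Xi (token norm bound), Gamma (bound on W),
Upsilon (bound on V), L (sequence length), delta (dispersion), Delta (gap), beta.\<close>

definition lambdaW_s :: "real \<Rightarrow> real \<Rightarrow> real \<Rightarrow> real \<Rightarrow> real" where
  "lambdaW_s \<delta>s \<Upsilon> L \<Xi> = exp \<delta>s * \<Upsilon> * L * \<Xi>^3"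

definition lambdaX_s :: "real \<Rightarrow> real \<Rightarrow> real \<Rightarrow> real \<Rightarrow> real" where
  "lambdaX_s \<delta>s \<Upsilon> \<Gamma> \<Xi> = exp \<delta>s * \<Upsilon> * (2 * \<Gamma> * \<Xi>^2 + 1)"

definition lambdaW_h :: "real \<Rightarrow> real \<Rightarrow> real \<Rightarrow> real \<Rightarrow> real \<Rightarrow> real" where
  "lambdaW_h \<delta>h \<Delta>h \<Upsilon> L \<Xi> = 2 * exp \<delta>h * \<Upsilon> * L * \<Xi>^3 * (1 + 1 / \<Delta>h)"

definition lambdaX_h :: "real \<Rightarrow> real \<Rightarrow> real \<Rightarrow> real \<Rightarrow> real \<Rightarrow> real \<Rightarrow> real" where
  "lambdaX_h \<delta>h \<Delta>h \<Upsilon> \<beta> \<Gamma> \<Xi> =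
     exp \<delta>h * \<Upsilon> * (\<beta> + 2 * \<Gamma> * \<Xi>^2 * (\<beta> + 1) * (1 + 1 / \<Delta>h))"

end

theory Submission
  imports Defs
begin

theorem corollary1:
  fixes \<Xi> \<Gamma> \<Upsilon> \<delta>s L \<beta> c1 c2 \<delta>h \<Delta>h :: real
  assumes "\<Xi> > 0" and "\<Gamma> > 0" and "\<Upsilon> > 0" and "\<delta>s > 0"
    and "L \<ge> 1" and "\<beta> > 1" and "c1 > 0" and "c2 > 0"
    and "\<delta>s \<le> 2 * \<Gamma> * \<Xi>^2"
    and "\<delta>h = c1 * \<delta>s" and "\<Delta>h = c2 * \<delta>s"
  shows "(c1 + (1 / \<delta>s) * ln (2 * (1 + 1 / (c2 * \<delta>s))) < 1 \<longrightarrow>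
            lambdaW_h \<delta>h \<Delta>h \<Upsilon> L \<Xi> < lambdaW_s \<delta>s \<Upsilon> L \<Xi>)
       \<and> (c1 + (1 / \<delta>s) * ln (2 * \<Gamma> * \<Xi>^2 * (1 + \<beta>) * (1 + 1 / (c2 * \<delta>s)) + \<beta>)
              - (1 / \<delta>s) * ln (2 * \<Gamma> * \<Xi>^2 + 1) < 1 \<longrightarrow>
            lambdaX_h \<delta>h \<Delta>h \<Upsilon> \<beta> \<Gamma> \<Xi> < lambdaX_s \<delta>s \<Upsilon> \<Gamma> \<Xi>)"
proof (intro conjI impI)
  have Dp: "\<Delta>h > 0" using assms by simp
  have ds: "\<delta>s > 0" using assms by simp
  have P: "\<Upsilon> * L * \<Xi>^3 > 0" using assms by simp
  {
    assume h: "c1 + (1 / \<delta>s) * ln (2 * (1 + 1 / (c2 * \<delta>s))) < 1"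
    define A where "A = 2 * (1 + 1 / \<Delta>h)"
    have Ap: "A > 0" using Dp by (simp add: A_def add_pos_pos)
    have "\<delta>s * (c1 + (1 / \<delta>s) * ln A) < \<delta>s * 1"
      using h ds assms(11) A_def by (intro mult_strict_left_mono) auto
    hence "\<delta>h + ln A < \<delta>s" using ds assms(10) by (simp add: algebra_simps)
    hence "exp (\<delta>h + ln A) < exp \<delta>s" by simp
    hence e: "exp \<delta>h * A < exp \<delta>s" using Ap by (simp add: exp_add)
    have "lambdaW_h \<delta>h \<Delta>h \<Upsilon> L \<Xi> = (exp \<delta>h * A) * (\<Upsilon> * L * \<Xi>^3)"
      by (simp add: lambdaW_h_def A_def algebra_simps)
    also have "\<dots> < exp \<delta>s * (\<Upsilon> * L * \<Xi>^3)"
      using e P by (rule mult_strict_right_mono)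
    also have "\<dots> = lambdaW_s \<delta>s \<Upsilon> L \<Xi>" by (simp add: lambdaW_s_def algebra_simps)
    finally show "lambdaW_h \<delta>h \<Delta>h \<Upsilon> L \<Xi> < lambdaW_s \<delta>s \<Upsilon> L \<Xi>" .
  }
  {
    assume h: "c1 + (1 / \<delta>s) * ln (2 * \<Gamma> * \<Xi>^2 * (1 + \<beta>) * (1 + 1 / (c2 * \<delta>s)) + \<beta>)
              - (1 / \<delta>s) * ln (2 * \<Gamma> * \<Xi>^2 + 1) < 1"
    define A where "A = 2 * \<Gamma> * \<Xi>^2 * (1 + \<beta>) * (1 + 1 / \<Delta>h) + \<beta>"
    define B where "B = 2 * \<Gamma> * \<Xi>^2 + 1"
    have Ap: "A > 0" using Dp assms by (simp add: A_def add_pos_pos)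
    have Bp: "B > 0" using assms by (simp add: B_def add_pos_pos)
    have "\<delta>s * (c1 + (1 / \<delta>s) * ln A - (1 / \<delta>s) * ln B) < \<delta>s * 1"
      using h ds assms(11) A_def B_def by (intro mult_strict_left_mono) auto
    hence "\<delta>h + ln A < \<delta>s + ln B" using ds assms(10) by (simp add: algebra_simps)
    hence "exp (\<delta>h + ln A) < exp (\<delta>s + ln B)" by simp
    hence e: "exp \<delta>h * A < exp \<delta>s * B" using Ap Bp by (simp add: exp_add)
    have "lambdaX_h \<delta>h \<Delta>h \<Upsilon> \<beta> \<Gamma> \<Xi> = (exp \<delta>h * A) * \<Upsilon>"
      by (simp add: lambdaX_h_def A_def algebra_simps)
    also have "\<dots> < (exp \<delta>s * B) * \<Upsilon>"
      using e assms(3) by (rule mult_strict_right_mono)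
    also have "\<dots> = lambdaX_s \<delta>s \<Upsilon> \<Gamma> \<Xi>" by (simp add: lambdaX_s_def B_def algebra_simps)
    finally show "lambdaX_h \<delta>h \<Delta>h \<Upsilon> \<beta> \<Gamma> \<Xi> < lambdaX_s \<delta>s \<Upsilon> \<Gamma> \<Xi>" .
  }
qed

end
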